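(* Let $G$ be a permutation group admitting a base $B$ of open subgroups such that for every pair $V\subseteq U$ in $B$ the group $N_G(V)/V$ is finite and $(G/U)^V=N_G(V)U/U$. Let $R$ be an associative ring and $M$ an $R\otimes\mathbb Q$-module, considered as an $R\langle G\rangle$-module with trivial $G$-action. Then every essential extension $E$ of $M$ in $\mathrm{Sm}_R(G)$ is a trivial $G$-module. In particular, if $M=M\otimes\mathbb Q$ is an injective $R$-module, then $M$ (with trivial $G$-action) is an injective object of $\mathrm{Sm}_R(G)$.
   Context: A permutation group is a Hausdorff topological group admitting a base of open sets consisting of left and right translates of subgroups. $R\langle G\rangle$ is the group ring ($G$ acts trivially on $R$); $\mathrm{Sm}_R(G)$ is the category of smooth left $R\langle G\rangle$-modules (every element has an open stabilizer). $(G/U)^V$ is the set of $V$-fixed points of $G/U$. An injection $M\hookrightarrow E$ is an essential extension if every non-zero subobject of $E$ meets $M$ non-trivially. *)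

theory Defs
  imports "HOL-Algebra.Group_Action" "HOL-Analysis.Analysis"
begin

definition topological_group :: "('g, 'z) monoid_scheme \<Rightarrow> 'g topology \<Rightarrow> bool" where
  "topological_group G T \<longleftrightarrow>
     group G \<and> topspace T = carrier G \<and>
     continuous_map (prod_topology T T) T (\<lambda>p. fst p \<otimes>\<^bsub>G\<^esub> snd p) \<and>
     continuous_map T T (\<lambda>x. inv\<^bsub>G\<^esub> x)"

definition permutation_group :: "('g, 'z) monoid_scheme \<Rightarrow> 'g topology \<Rightarrow> bool" where
  "permutation_group G T \<longleftrightarrow>
     topological_group G T \<and> Hausdorff_space T \<and>
     (\<exists>\<B>. (\<forall>W\<in>\<B>. openin T W \<and>
              (\<exists>H g. subgroup H G \<and> g \<in> carrier G \<and>
                     (W = g <#\<^bsub>G\<^esub> H \<or> W = H #>\<^bsub>G\<^esub> g))) \<and>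
          (\<forall>W. openin T W \<longrightarrow> (\<forall>x\<in>W. \<exists>U\<in>\<B>. x \<in> U \<and> U \<subseteq> W)))"

definition open_subgroup_base :: "('g, 'z) monoid_scheme \<Rightarrow> 'g topology \<Rightarrow> 'g set set \<Rightarrow> bool" where
  "open_subgroup_base G T B \<longleftrightarrow>
     (\<forall>U\<in>B. subgroup U G \<and> openin T U) \<and>
     (\<forall>W. openin T W \<and> \<one>\<^bsub>G\<^esub> \<in> W \<longrightarrow> (\<exists>U\<in>B. U \<subseteq> W))"

definition normalizer_quotient :: "('g, 'z) monoid_scheme \<Rightarrow> 'g set \<Rightarrow> 'g set set" where
  "normalizer_quotient G V = (\<lambda>n. V #>\<^bsub>G\<^esub> n) ` normalizer G V"

definition fixed_cosets :: "('g, 'z) monoid_scheme \<Rightarrow> 'g set \<Rightarrow> 'g set \<Rightarrow> 'g set set" where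
  "fixed_cosets G U V =
     {C \<in> (\<lambda>g. g <#\<^bsub>G\<^esub> U) ` carrier G. \<forall>v\<in>V. v <#\<^bsub>G\<^esub> C = C}"

definition normalizer_cosets :: "('g, 'z) monoid_scheme \<Rightarrow> 'g set \<Rightarrow> 'g set \<Rightarrow> 'g set set" where
  "normalizer_cosets G U V = (\<lambda>n. n <#\<^bsub>G\<^esub> U) ` normalizer G V"

record ('r, 'e) rmod =
  mcar :: "'e set"
  madd :: "'e \<Rightarrow> 'e \<Rightarrow> 'e"
  mzero :: 'e
  msc :: "'r \<Rightarrow> 'e \<Rightarrow> 'e"

definition is_rmodule :: "('r::ring_1, 'e) rmod \<Rightarrow> bool" where
  "is_rmodule M \<longleftrightarrow>
     mzero M \<in> mcar M \<and>
     (\<forall>x\<in>mcar M. \<forall>y\<in>mcar M. madd M x y \<in> mcar M) \<and>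
     (\<forall>r x. x \<in> mcar M \<longrightarrow> msc M r x \<in> mcar M) \<and>
     (\<forall>x\<in>mcar M. \<forall>y\<in>mcar M. \<forall>z\<in>mcar M. madd M (madd M x y) z = madd M x (madd M y z)) \<and>
     (\<forall>x\<in>mcar M. \<forall>y\<in>mcar M. madd M x y = madd M y x) \<and>
     (\<forall>x\<in>mcar M. madd M (mzero M) x = x) \<and>
     (\<forall>x\<in>mcar M. \<exists>y\<in>mcar M. madd M x y = mzero M) \<and>
     (\<forall>r x y. x \<in> mcar M \<longrightarrow> y \<in> mcar M \<longrightarrow> msc M r (madd M x y) = madd M (msc M r x) (msc M r y)) \<and>
     (\<forall>r s x. x \<in> mcar M \<longrightarrow> msc M (r + s) x = madd M (msc M r x) (msc M s x)) \<and>
     (\<forall>r s x. x \<in> mcar M \<longrightarrow> msc M (r * s) x = msc M r (msc M s x)) \<and>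
     (\<forall>x\<in>mcar M. msc M 1 x = x)"

definition rlinear :: "('r::ring_1, 'a) rmod \<Rightarrow> ('r, 'b) rmod \<Rightarrow> ('a \<Rightarrow> 'b) \<Rightarrow> bool" where
  "rlinear A B f \<longleftrightarrow>
     (\<forall>x\<in>mcar A. f x \<in> mcar B) \<and>
     (\<forall>x\<in>mcar A. \<forall>y\<in>mcar A. f (madd A x y) = madd B (f x) (f y)) \<and>
     (\<forall>r. \<forall>x\<in>mcar A. f (msc A r x) = msc B r (f x))"

text \<open>An R\<otimes>Q-module, viewed as an R-module: an R-module whose underlying abelian
  group is uniquely divisible (multiplication by each positive integer is bijective).\<close>
definition rQ_module :: "('r::ring_1, 'e) rmod \<Rightarrow> bool" where
  "rQ_module M \<longleftrightarrow> is_rmodule M \<and>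
     (\<forall>n::nat. n > 0 \<longrightarrow> bij_betw (msc M (of_nat n)) (mcar M) (mcar M))"

definition smooth_module ::
  "('g, 'z) monoid_scheme \<Rightarrow> 'g topology \<Rightarrow> ('r::ring_1, 'e) rmod \<Rightarrow> ('g \<Rightarrow> 'e \<Rightarrow> 'e) \<Rightarrow> bool" where
  "smooth_module G T E act \<longleftrightarrow>
     is_rmodule E \<and>
     (\<forall>g\<in>carrier G. \<forall>x\<in>mcar E. act g x \<in> mcar E) \<and>
     (\<forall>x\<in>mcar E. act \<one>\<^bsub>G\<^esub> x = x) \<and>
     (\<forall>g\<in>carrier G. \<forall>h\<in>carrier G. \<forall>x\<in>mcar E. act (g \<otimes>\<^bsub>G\<^esub> h) x = act g (act h x)) \<and>
     (\<forall>g\<in>carrier G. rlinear E E (act g)) \<and>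
     (\<forall>x\<in>mcar E. openin T {g \<in> carrier G. act g x = x})"

definition smooth_hom ::
  "('g, 'z) monoid_scheme \<Rightarrow> ('r::ring_1, 'a) rmod \<Rightarrow> ('g \<Rightarrow> 'a \<Rightarrow> 'a)
     \<Rightarrow> ('r, 'b) rmod \<Rightarrow> ('g \<Rightarrow> 'b \<Rightarrow> 'b) \<Rightarrow> ('a \<Rightarrow> 'b) \<Rightarrow> bool" where
  "smooth_hom G A actA B actB f \<longleftrightarrow>
     rlinear A B f \<and> (\<forall>g\<in>carrier G. \<forall>x\<in>mcar A. f (actA g x) = actB g (f x))"

definition smooth_submodule ::
  "('g, 'z) monoid_scheme \<Rightarrow> ('r::ring_1, 'e) rmod \<Rightarrow> ('g \<Rightarrow> 'e \<Rightarrow> 'e) \<Rightarrow> 'e set \<Rightarrow> bool" where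
  "smooth_submodule G E act S \<longleftrightarrow>
     S \<subseteq> mcar E \<and> mzero E \<in> S \<and>
     (\<forall>x\<in>S. \<forall>y\<in>S. madd E x y \<in> S) \<and>
     (\<forall>r. \<forall>x\<in>S. msc E r x \<in> S) \<and>
     (\<forall>g\<in>carrier G. \<forall>x\<in>S. act g x \<in> S)"

definition essential_extension ::
  "('g, 'z) monoid_scheme \<Rightarrow> 'g topology \<Rightarrow> ('r::ring_1, 'm) rmod \<Rightarrow> ('g \<Rightarrow> 'm \<Rightarrow> 'm)
     \<Rightarrow> ('r, 'e) rmod \<Rightarrow> ('g \<Rightarrow> 'e \<Rightarrow> 'e) \<Rightarrow> ('m \<Rightarrow> 'e) \<Rightarrow> bool" where
  "essential_extension G T M actM E actE f \<longleftrightarrow>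
     smooth_module G T M actM \<and> smooth_module G T E actE \<and>
     smooth_hom G M actM E actE f \<and> inj_on f (mcar M) \<and>
     (\<forall>S. smooth_submodule G E actE S \<and> S \<noteq> {mzero E} \<longrightarrow>
          (\<exists>x\<in>S. x \<noteq> mzero E \<and> x \<in> f ` mcar M))"

definition trivial_action :: "('g, 'z) monoid_scheme \<Rightarrow> ('r, 'e) rmod \<Rightarrow> ('g \<Rightarrow> 'e \<Rightarrow> 'e) \<Rightarrow> bool" where
  "trivial_action G E act \<longleftrightarrow> (\<forall>g\<in>carrier G. \<forall>x\<in>mcar E. act g x = x)"

text \<open>Injective R-module, relative to test modules whose carriers live in type 'x.\<close>
definition rmod_injective_in :: "'x itself \<Rightarrow> ('r::ring_1, 'm) rmod \<Rightarrow> bool" where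
  "rmod_injective_in (_ :: 'x itself) M \<longleftrightarrow>
     (\<forall>(X :: ('r, 'x) rmod) (Y :: ('r, 'x) rmod) i h.
        is_rmodule X \<and> is_rmodule Y \<and> rlinear X Y i \<and> inj_on i (mcar X) \<and> rlinear X M h \<longrightarrow>
        (\<exists>k. rlinear Y M k \<and> (\<forall>x\<in>mcar X. k (i x) = h x)))"

definition smooth_injective_in ::
  "'a itself \<Rightarrow> 'b itself \<Rightarrow> ('g, 'z) monoid_scheme \<Rightarrow> 'g topology
     \<Rightarrow> ('r::ring_1, 'm) rmod \<Rightarrow> ('g \<Rightarrow> 'm \<Rightarrow> 'm) \<Rightarrow> bool" where
  "smooth_injective_in (_ :: 'a itself) (_ :: 'b itself) G T M actM \<longleftrightarrow>
     smooth_module G T M actM \<and>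
     (\<forall>(A :: ('r, 'a) rmod) actA (B :: ('r, 'b) rmod) actB i h.
        smooth_module G T A actA \<and> smooth_module G T B actB \<and>
        smooth_hom G A actA B actB i \<and> inj_on i (mcar A) \<and>
        smooth_hom G A actA M actM h \<longrightarrow>
        (\<exists>k. smooth_hom G B actB M actM k \<and> (\<forall>x\<in>mcar A. k (i x) = h x)))"

end

theory Submission imports Defs "HOL-Algebra.FiniteProduct" begin

definition AG :: "('r, 'e) rmod \<Rightarrow> 'e monoid" where
  "AG X = \<lparr>carrier = mcar X, monoid.mult = madd X, monoid.one = mzero X\<rparr>"

lemma AG_simps [simp]: "carrier (AG X) = mcar X" "monoid.mult (AG X) = madd X" "monoid.one (AG X) = mzero X"
  by (simp_all add: AG_def)

lemma AG_comm_group: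
  fixes X :: "('r::ring_1, 'e) rmod"
  assumes "is_rmodule X" shows "comm_group (AG X)"
proof (rule comm_groupI)
  show "\<And>x y. x \<in> carrier (AG X) \<Longrightarrow> y \<in> carrier (AG X) \<Longrightarrow> x \<otimes>\<^bsub>AG X\<^esub> y \<in> carrier (AG X)"
    using assms by (simp add: is_rmodule_def)
  show "\<one>\<^bsub>AG X\<^esub> \<in> carrier (AG X)" using assms by (simp add: is_rmodule_def)
  show "\<And>x y z. x \<in> carrier (AG X) \<Longrightarrow> y \<in> carrier (AG X) \<Longrightarrow> z \<in> carrier (AG X) \<Longrightarrow>
     x \<otimes>\<^bsub>AG X\<^esub> y \<otimes>\<^bsub>AG X\<^esub> z = x \<otimes>\<^bsub>AG X\<^esub> (y \<otimes>\<^bsub>AG X\<^esub> z)"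
    using assms unfolding is_rmodule_def AG_simps by blast
  show "\<And>x y. x \<in> carrier (AG X) \<Longrightarrow> y \<in> carrier (AG X) \<Longrightarrow> x \<otimes>\<^bsub>AG X\<^esub> y = y \<otimes>\<^bsub>AG X\<^esub> x"
    using assms unfolding is_rmodule_def AG_simps by blast
  show "\<And>x. x \<in> carrier (AG X) \<Longrightarrow> \<one>\<^bsub>AG X\<^esub> \<otimes>\<^bsub>AG X\<^esub> x = x"
    using assms unfolding is_rmodule_def AG_simps by blast
  show "\<And>x. x \<in> carrier (AG X) \<Longrightarrow> \<exists>y\<in>carrier (AG X). y \<otimes>\<^bsub>AG X\<^esub> x = \<one>\<^bsub>AG X\<^esub>"
    using assms unfolding is_rmodule_def by simp
qed

lemma rmod_closed:
  assumes "is_rmodule X"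
  shows "mzero X \<in> mcar X" "x \<in> mcar X \<Longrightarrow> y \<in> mcar X \<Longrightarrow> madd X x y \<in> mcar X"
    "x \<in> mcar X \<Longrightarrow> msc X r x \<in> mcar X"
  using assms by (auto simp: is_rmodule_def)

lemma msc_add: "is_rmodule X \<Longrightarrow> x \<in> mcar X \<Longrightarrow> y \<in> mcar X \<Longrightarrow> msc X r (madd X x y) = madd X (msc X r x) (msc X r y)"
  and msc_addsc: "is_rmodule X \<Longrightarrow> x \<in> mcar X \<Longrightarrow> msc X (r + s) x = madd X (msc X r x) (msc X s x)"
  and msc_mult: "is_rmodule X \<Longrightarrow> x \<in> mcar X \<Longrightarrow> msc X (r * s) x = msc X r (msc X s x)"
  and msc_one: "is_rmodule X \<Longrightarrow> x \<in> mcar X \<Longrightarrow> msc X 1 x = x"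
  by (auto simp: is_rmodule_def)

lemma msc_zero_vec:
  fixes X :: "('r::ring_1, 'e) rmod"
  assumes X: "is_rmodule X" shows "msc X r (mzero X) = mzero X"
proof -
  interpret comm_group "AG X" by (rule AG_comm_group[OF X])
  have z: "mzero X \<in> mcar X" using rmod_closed[OF X] by simp
  have "msc X r (mzero X) = madd X (msc X r (mzero X)) (msc X r (mzero X))"
    using msc_add[OF X z z] l_one[of "mzero X"] z by simp
  then show ?thesis using rmod_closed[OF X] z l_cancel_one'[of "msc X r (mzero X)" "msc X r (mzero X)"]
    by simp
qed

lemma msc_zero_sc:
  fixes X :: "('r::ring_1, 'e) rmod"
  assumes X: "is_rmodule X" and x: "x \<in> mcar X" shows "msc X 0 x = mzero X"
proof -
  interpret comm_group "AG X" by (rule AG_comm_group[OF X])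
  have "msc X 0 x = madd X (msc X 0 x) (msc X 0 x)"
    using msc_addsc[OF X x, of 0 0] by simp
  then show ?thesis using rmod_closed[OF X] x l_cancel_one'[of "msc X 0 x" "msc X 0 x"]
    by simp
qed

lemma msc_neg:
  fixes X :: "('r::ring_1, 'e) rmod"
  assumes X: "is_rmodule X" and x: "x \<in> mcar X" shows "msc X (-1) x = inv\<^bsub>AG X\<^esub> x"
proof -
  interpret comm_group "AG X" by (rule AG_comm_group[OF X])
  have "madd X x (msc X (-1) x) = mzero X"
    using msc_addsc[OF X x, of 1 "-1"] msc_one[OF X x] msc_zero_sc[OF X x] by simp
  then show ?thesis using rmod_closed[OF X] x
    by (metis AG_simps inv_equality m_comm)
qed

lemma rlinear_hom:
  fixes X :: "('r::ring_1, 'a) rmod" and Y :: "('r, 'b) rmod"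
  assumes "is_rmodule X" "is_rmodule Y" "rlinear X Y f"
  shows "group_hom (AG X) (AG Y) f"
  using assms AG_comm_group[OF assms(1)] AG_comm_group[OF assms(2)]
  unfolding group_hom_def group_hom_axioms_def hom_def rlinear_def
  by (auto simp: comm_group.axioms(2))

lemma finprod_hom:
  assumes hom: "group_hom G H f" and cG: "comm_group G" and cH: "comm_group H" and g: "g \<in> A \<rightarrow> carrier G"
  shows "f (finprod G g A) = finprod H (\<lambda>x. f (g x)) A"
proof -
  interpret G: comm_group G by (rule cG)
  interpret H: comm_group H by (rule cH)
  interpret f: group_hom G H f by (rule hom)
  show ?thesis using g
  proof (induct A rule: infinite_finite_induct)
    case (infinite A) then show ?case by (simp add: G.finprod_infinite H.finprod_infinite f.hom_one)
  next
    case empty then show ?case by simp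
  next
    case (insert a A)
    have gA: "g \<in> A \<rightarrow> carrier G" and ga: "g a \<in> carrier G" using insert by auto
    have "f (finprod G g (insert a A)) = f (g a \<otimes>\<^bsub>G\<^esub> finprod G g A)"
      using G.finprod_insert[OF insert(1,2) gA ga] by simp
    also have "\<dots> = f (g a) \<otimes>\<^bsub>H\<^esub> f (finprod G g A)"
      using ga gA by simp
    also have "\<dots> = finprod H (\<lambda>x. f (g x)) (insert a A)"
      using insert gA ga by (subst H.finprod_insert) (auto simp: Pi_def)
    finally show ?case .
  qed
qed


definition fixv :: "('g, 'z) monoid_scheme \<Rightarrow> ('r, 'e) rmod \<Rightarrow> ('g \<Rightarrow> 'e \<Rightarrow> 'e) \<Rightarrow> 'g set \<Rightarrow> 'e set" where
  "fixv G X act V = {x \<in> mcar X. \<forall>v\<in>V. act v x = x}"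

definition rep :: "('g, 'z) monoid_scheme \<Rightarrow> 'g set \<Rightarrow> 'g set \<Rightarrow> 'g" where
  "rep G V C = (SOME n. n \<in> normalizer G V \<and> C = V #>\<^bsub>G\<^esub> n)"

definition Sop :: "('g, 'z) monoid_scheme \<Rightarrow> ('r, 'e) rmod \<Rightarrow> ('g \<Rightarrow> 'e \<Rightarrow> 'e) \<Rightarrow> 'g set \<Rightarrow> 'e \<Rightarrow> 'e" where
  "Sop G X act V y = finprod (AG X) (\<lambda>C. act (rep G V C) y) (normalizer_quotient G V)"

lemma (in group) normalizer_mem:
  assumes V: "subgroup V G" and n: "n \<in> normalizer G V"
  shows "n \<in> carrier G" "n <# V #> inv n = V"
proof -
  have Vc: "V \<subseteq> carrier G" using V subgroup.subset by blast
  show "n \<in> carrier G" "n <# V #> inv n = V" using n Vc unfolding normalizer_def stabilizer_def by auto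
qed

lemma (in group) normalizer_conj:
  assumes V: "subgroup V G" and n: "n \<in> normalizer G V" and v: "v \<in> V"
  shows "inv n \<otimes> v \<otimes> n \<in> V"
proof -
  have nc: "n \<in> carrier G" and eq: "n <# V #> inv n = V" using normalizer_mem[OF V n] by auto
  have Vc: "V \<subseteq> carrier G" using V subgroup.subset by blast
  from v eq have "v \<in> n <# V #> inv n" by simp
  then obtain v' where v': "v' \<in> V" "v = n \<otimes> v' \<otimes> inv n"
    unfolding r_coset_def l_coset_def by auto
  have v'c: "v' \<in> carrier G" using v' Vc by auto
  have "inv n \<otimes> v \<otimes> n = v'" using v' nc v'c by (simp add: m_assoc[symmetric]; simp add: m_assoc)
  then show ?thesis using v' by simp
qed

locale smod = group G for G (structure) +
  fixes X :: "('r::ring_1, 'e) rmod" and act :: "'g \<Rightarrow> 'e \<Rightarrow> 'e"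
  assumes modX: "is_rmodule X"
    and act_closed: "g \<in> carrier G \<Longrightarrow> x \<in> mcar X \<Longrightarrow> act g x \<in> mcar X"
    and act_one: "x \<in> mcar X \<Longrightarrow> act \<one> x = x"
    and act_mult: "g \<in> carrier G \<Longrightarrow> h \<in> carrier G \<Longrightarrow> x \<in> mcar X \<Longrightarrow> act (g \<otimes> h) x = act g (act h x)"
    and act_lin: "g \<in> carrier G \<Longrightarrow> rlinear X X (act g)"
begin

sublocale A: comm_group "AG X" by (rule AG_comm_group[OF modX])

lemma madd_closed: "x \<in> mcar X \<Longrightarrow> y \<in> mcar X \<Longrightarrow> madd X x y \<in> mcar X"
  using A.m_closed by simp

lemma ainv_closed: "y \<in> mcar X \<Longrightarrow> inv\<^bsub>AG X\<^esub> y \<in> mcar X"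
  using A.inv_closed by simp

lemma zero_closed: "mzero X \<in> mcar X"
  using A.one_closed by simp

lemma act_hom: "g \<in> carrier G \<Longrightarrow> group_hom (AG X) (AG X) (act g)"
  using rlinear_hom[OF modX modX act_lin] .

lemma act_A_one: "g \<in> carrier G \<Longrightarrow> act g (mzero X) = mzero X"
  using group_hom.hom_one[OF act_hom] by simp

lemma act_A_mult: "g \<in> carrier G \<Longrightarrow> x \<in> mcar X \<Longrightarrow> y \<in> mcar X \<Longrightarrow> act g (madd X x y) = madd X (act g x) (act g y)"
  using group_hom.hom_mult[OF act_hom] by fastforce

lemma act_A_inv: "g \<in> carrier G \<Longrightarrow> x \<in> mcar X \<Longrightarrow> act g (inv\<^bsub>AG X\<^esub> x) = inv\<^bsub>AG X\<^esub> (act g x)"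
  using group_hom.hom_inv[OF act_hom] by fastforce

lemma fixv_sub: "fixv G X act V \<subseteq> mcar X" by (auto simp: fixv_def)

lemma fixv_one: assumes V: "subgroup V G" shows "mzero X \<in> fixv G X act V"
proof -
  have "\<And>v. v \<in> V \<Longrightarrow> act v (mzero X) = mzero X" using act_A_one subgroup.subset[OF V] by blast
  moreover have "mzero X \<in> mcar X" using A.one_closed by simp
  ultimately show ?thesis unfolding fixv_def by blast
qed

lemma fixv_mult: assumes V: "subgroup V G" and x: "x \<in> fixv G X act V" and y: "y \<in> fixv G X act V"
  shows "madd X x y \<in> fixv G X act V"
proof -
  have xc: "x \<in> mcar X" and yc: "y \<in> mcar X" using x y by (auto simp: fixv_def)
  have "\<And>v. v \<in> V \<Longrightarrow> act v (madd X x y) = madd X x y"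
  proof -
    fix v assume v: "v \<in> V"
    then have vc: "v \<in> carrier G" using subgroup.subset[OF V] by blast
    have "act v (madd X x y) = madd X (act v x) (act v y)" by (rule act_A_mult[OF vc xc yc])
    then show "act v (madd X x y) = madd X x y" using x y v by (simp add: fixv_def)
  qed
  moreover have "madd X x y \<in> mcar X" using A.m_closed xc yc by simp
  ultimately show ?thesis unfolding fixv_def by blast
qed

lemma fixv_inv: assumes V: "subgroup V G" and x: "x \<in> fixv G X act V"
  shows "inv\<^bsub>AG X\<^esub> x \<in> fixv G X act V"
proof -
  have xc: "x \<in> mcar X" using x by (auto simp: fixv_def)
  have "\<And>v. v \<in> V \<Longrightarrow> act v (inv\<^bsub>AG X\<^esub> x) = inv\<^bsub>AG X\<^esub> x"
  proof -
    fix v assume v: "v \<in> V"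
    then have vc: "v \<in> carrier G" using subgroup.subset[OF V] by blast
    have "act v (inv\<^bsub>AG X\<^esub> x) = inv\<^bsub>AG X\<^esub> (act v x)" by (rule act_A_inv[OF vc xc])
    then show "act v (inv\<^bsub>AG X\<^esub> x) = inv\<^bsub>AG X\<^esub> x" using x v by (simp add: fixv_def)
  qed
  moreover have "inv\<^bsub>AG X\<^esub> x \<in> mcar X" using A.inv_closed xc by simp
  ultimately show ?thesis unfolding fixv_def by blast
qed

lemma act_fixv_norm:
  assumes V: "subgroup V G" and n: "n \<in> normalizer G V" and y: "y \<in> fixv G X act V"
  shows "act n y \<in> fixv G X act V"
proof -
  have nc: "n \<in> carrier G" using normalizer_mem[OF V n] by auto
  have yc: "y \<in> mcar X" and yf: "\<And>v. v \<in> V \<Longrightarrow> act v y = y" using y by (auto simp: fixv_def)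
  have "act v (act n y) = act n y" if v: "v \<in> V" for v
  proof -
    have vc: "v \<in> carrier G" using v V subgroup.subset by blast
    have c: "inv n \<otimes> v \<otimes> n \<in> V" by (rule normalizer_conj[OF V n v])
    have "v \<otimes> n = n \<otimes> (inv n \<otimes> v \<otimes> n)" using nc vc by (simp add: m_assoc[symmetric])
    then have "act v (act n y) = act n (act (inv n \<otimes> v \<otimes> n) y)"
      using act_mult[OF vc nc yc] act_mult[OF nc _ yc, of "inv n \<otimes> v \<otimes> n"] nc vc by simp
    also have "\<dots> = act n y" using yf[OF c] by simp
    finally show ?thesis .
  qed
  then show ?thesis using act_closed[OF nc yc] by (simp add: fixv_def)
qed

lemma act_welldef:
  assumes V: "subgroup V G" and m: "m \<in> normalizer G V" and m': "m' \<in> normalizer G V"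
    and eq: "V #> m = V #> m'" and y: "y \<in> fixv G X act V"
  shows "act m y = act m' y"
proof -
  have mc: "m \<in> carrier G" and m'c: "m' \<in> carrier G" using normalizer_mem[OF V] m m' by auto
  have "m' \<in> V #> m" using rcos_self[OF m'c V] eq by simp
  then obtain v where v: "v \<in> V" "m' = v \<otimes> m" unfolding r_coset_def by auto
  have vc: "v \<in> carrier G" using v V subgroup.subset by blast
  have yc: "y \<in> mcar X" using y by (auto simp: fixv_def)
  have "act m' y = act v (act m y)" using v act_mult vc mc yc by simp
  also have "\<dots> = act m y" using act_fixv_norm[OF V m y] v by (auto simp: fixv_def)
  finally show ?thesis by simp
qed

lemma rep_props:
  assumes "C \<in> normalizer_quotient G V"
  shows "rep G V C \<in> normalizer G V" "C = V #> rep G V C"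
proof -
  from assms obtain n where "n \<in> normalizer G V" "C = V #> n" by (auto simp: normalizer_quotient_def)
  then have "\<exists>n. n \<in> normalizer G V \<and> C = V #> n" by blast
  then have "rep G V C \<in> normalizer G V \<and> C = V #> rep G V C" unfolding rep_def by (rule someI_ex)
  then show "rep G V C \<in> normalizer G V" "C = V #> rep G V C" by auto
qed

lemma rep_carrier: "subgroup V G \<Longrightarrow> C \<in> normalizer_quotient G V \<Longrightarrow> rep G V C \<in> carrier G"
  using rep_props(1) normalizer_mem(1) by blast

lemma Sop_fun: "subgroup V G \<Longrightarrow> y \<in> mcar X \<Longrightarrow> (\<lambda>C. act (rep G V C) y) \<in> normalizer_quotient G V \<rightarrow> carrier (AG X)"
  using rep_carrier act_closed by auto

lemma Sop_closed:
  assumes V: "subgroup V G" and y: "y \<in> mcar X" shows "Sop G X act V y \<in> mcar X"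
  unfolding Sop_def using A.finprod_closed[OF Sop_fun[OF V y]] by simp

lemma Sop_mult:
  assumes V: "subgroup V G" and x: "x \<in> mcar X" and y: "y \<in> mcar X"
  shows "Sop G X act V (madd X x y) = madd X (Sop G X act V x) (Sop G X act V y)"
proof -
  have "Sop G X act V (madd X x y) = finprod (AG X) (\<lambda>C. act (rep G V C) x \<otimes>\<^bsub>AG X\<^esub> act (rep G V C) y) (normalizer_quotient G V)"
    unfolding Sop_def
  proof (rule A.finprod_cong')
    show "(\<lambda>C. act (rep G V C) x \<otimes>\<^bsub>AG X\<^esub> act (rep G V C) y) \<in> normalizer_quotient G V \<rightarrow> carrier (AG X)"
      using x y by (auto intro!: madd_closed act_closed rep_carrier[OF V])
    show "\<And>C. C \<in> normalizer_quotient G V \<Longrightarrow> act (rep G V C) (madd X x y) = act (rep G V C) x \<otimes>\<^bsub>AG X\<^esub> act (rep G V C) y"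
      using act_A_mult[OF rep_carrier[OF V] x y] by simp
  qed simp
  also have "\<dots> = madd X (Sop G X act V x) (Sop G X act V y)"
    unfolding Sop_def using A.finprod_multf[OF Sop_fun[OF V x] Sop_fun[OF V y]] by simp
  finally show ?thesis .
qed

lemma Sop_one:
  assumes V: "subgroup V G" shows "Sop G X act V (mzero X) = mzero X"
proof -
  have "Sop G X act V (mzero X) = finprod (AG X) (\<lambda>C. \<one>\<^bsub>AG X\<^esub>) (normalizer_quotient G V)"
    unfolding Sop_def
    by (rule A.finprod_cong') (auto simp: act_A_one[OF rep_carrier[OF V]] zero_closed)
  then show ?thesis using A.finprod_one[of "normalizer_quotient G V"] by simp
qed

lemma Sop_inv:
  assumes V: "subgroup V G" and x: "x \<in> mcar X"
  shows "Sop G X act V (inv\<^bsub>AG X\<^esub> x) = inv\<^bsub>AG X\<^esub> (Sop G X act V x)"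
proof -
  have ix: "inv\<^bsub>AG X\<^esub> x \<in> mcar X" using A.inv_closed x by simp
  have "madd X (Sop G X act V x) (Sop G X act V (inv\<^bsub>AG X\<^esub> x)) = mzero X"
    using Sop_mult[OF V x ix] Sop_one[OF V] A.r_inv x by simp
  then have "Sop G X act V (inv\<^bsub>AG X\<^esub> x) \<otimes>\<^bsub>AG X\<^esub> Sop G X act V x = \<one>\<^bsub>AG X\<^esub>"
    using A.m_comm Sop_closed[OF V x] Sop_closed[OF V ix] by simp
  then show ?thesis using A.inv_equality Sop_closed[OF V x] Sop_closed[OF V ix] by simp
qed

lemma Sop_norm:
  assumes V: "subgroup V G" and n: "n \<in> normalizer G V" and y: "y \<in> fixv G X act V"
  shows "Sop G X act V (act n y) = Sop G X act V y"
proof -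
  let ?Q = "normalizer_quotient G V"
  define \<phi> where "\<phi> = (\<lambda>C. C #> n)"
  have Vc: "V \<subseteq> carrier G" using V subgroup.subset by blast
  interpret N: subgroup "normalizer G V" G using normalizer_imp_subgroup[OF Vc] .
  have nc: "n \<in> carrier G" using n by auto
  have yc: "y \<in> mcar X" using y by (auto simp: fixv_def)
  have phiQ: "\<phi> C \<in> ?Q" if C: "C \<in> ?Q" for C
  proof -
    from C obtain m where m: "m \<in> normalizer G V" "C = V #> m" by (auto simp: normalizer_quotient_def)
    have "\<phi> C = V #> (m \<otimes> n)" using m coset_mult_assoc[OF Vc _ nc, of m] by (auto simp: \<phi>_def)
    then show ?thesis using m n by (auto simp: normalizer_quotient_def)
  qed
  have img: "\<phi> ` ?Q = ?Q"
  proof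
    show "\<phi> ` ?Q \<subseteq> ?Q" using phiQ by auto
    show "?Q \<subseteq> \<phi> ` ?Q"
    proof
      fix C assume "C \<in> ?Q"
      then obtain m where m: "m \<in> normalizer G V" "C = V #> m" by (auto simp: normalizer_quotient_def)
      have m': "m \<otimes> inv n \<in> normalizer G V" using m n by auto
      have mc: "m \<in> carrier G" using m by auto
      have "\<phi> (V #> (m \<otimes> inv n)) = V #> (m \<otimes> inv n \<otimes> n)"
        using coset_mult_assoc[OF Vc _ nc, of "m \<otimes> inv n"] mc nc by (simp add: \<phi>_def)
      also have "\<dots> = C" using m mc nc by (simp add: m_assoc)
      finally show "C \<in> \<phi> ` ?Q" using m' by (force simp: normalizer_quotient_def)
    qed
  qed
  have inj: "inj_on \<phi> ?Q"
  proof
    fix C C' assume C: "C \<in> ?Q" and C': "C' \<in> ?Q" and eq: "\<phi> C = \<phi> C'"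
    have sub: "D \<subseteq> carrier G" if "D \<in> ?Q" for D
    proof -
      from that obtain m where m: "m \<in> normalizer G V" "D = V #> m" by (auto simp: normalizer_quotient_def)
      then show ?thesis using r_coset_subset_G[OF Vc, of m] by auto
    qed
    have "C = (C #> n) #> inv n" using coset_mult_assoc[OF sub[OF C] nc, of "inv n"] nc sub[OF C] by simp
    also have "\<dots> = (C' #> n) #> inv n" using eq by (simp add: \<phi>_def)
    also have "\<dots> = C'" using coset_mult_assoc[OF sub[OF C'] nc, of "inv n"] nc sub[OF C'] by simp
    finally show "C = C'" .
  qed
  have "Sop G X act V (act n y) = finprod (AG X) (\<lambda>C. act (rep G V (\<phi> C)) y) ?Q"
    unfolding Sop_def
  proof (rule A.finprod_cong')
    show "(\<lambda>C. act (rep G V (\<phi> C)) y) \<in> ?Q \<rightarrow> carrier (AG X)"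
      using Sop_fun[OF V yc] phiQ by auto
    fix C assume C: "C \<in> ?Q"
    have r: "rep G V C \<in> normalizer G V" "C = V #> rep G V C" using rep_props[OF C] by auto
    have r2: "rep G V (\<phi> C) \<in> normalizer G V" "\<phi> C = V #> rep G V (\<phi> C)" using rep_props[OF phiQ[OF C]] by auto
    have rc: "rep G V C \<in> carrier G" using r by auto
    have "V #> (rep G V C \<otimes> n) = \<phi> C" using coset_mult_assoc[OF Vc rc nc] r by (simp add: \<phi>_def)
    then have "act (rep G V C \<otimes> n) y = act (rep G V (\<phi> C)) y"
      using act_welldef[OF V _ r2(1) _ y, of "rep G V C \<otimes> n"] r(1) n r2(2) by auto
    then show "act (rep G V C) (act n y) = act (rep G V (\<phi> C)) y"
      using act_mult[OF rc nc yc] by simp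
  qed simp
  also have "\<dots> = finprod (AG X) (\<lambda>C. act (rep G V C) y) (\<phi> ` ?Q)"
    using A.finprod_reindex[OF _ inj, of "\<lambda>C. act (rep G V C) y"] Sop_fun[OF V yc] img by simp
  also have "\<dots> = Sop G X act V y" unfolding Sop_def img ..
  finally show ?thesis .
qed

end

lemma pow_msc:
  fixes M :: "('r::ring_1, 'e) rmod"
  assumes M: "is_rmodule M" and x: "x \<in> mcar M"
  shows "x [^]\<^bsub>AG M\<^esub> (k::nat) = msc M (of_nat k) x"
proof (induct k)
  case 0 then show ?case using msc_zero_sc[OF M x] by simp
next
  case (Suc k)
  interpret A: comm_group "AG M" by (rule AG_comm_group[OF M])
  have "x [^]\<^bsub>AG M\<^esub> Suc k = madd M (msc M (of_nat k) x) x" using Suc by simp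
  also have "\<dots> = madd M (msc M (of_nat k) x) (msc M 1 x)" using msc_one[OF M x] by simp
  also have "\<dots> = msc M (of_nat k + 1) x" using msc_addsc[OF M x] by simp
  finally show ?case by (simp add: add.commute)
qed

lemma Sop_transfer:
  assumes X: "smod G X actX" and Y: "smod G Y actY" and f: "rlinear X Y f"
    and eqv: "\<forall>g\<in>carrier G. \<forall>x\<in>mcar X. f (actX g x) = actY g (f x)"
    and V: "subgroup V G" and y: "y \<in> mcar X"
  shows "f (Sop G X actX V y) = Sop G Y actY V (f y)"
proof -
  interpret X: smod G X actX by (rule X)
  interpret Y: smod G Y actY by (rule Y)
  have h: "group_hom (AG X) (AG Y) f" by (rule rlinear_hom[OF X.modX Y.modX f])
  have fy: "f y \<in> mcar Y" using f y by (auto simp: rlinear_def)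
  have "f (Sop G X actX V y) = finprod (AG Y) (\<lambda>C. f (actX (rep G V C) y)) (normalizer_quotient G V)"
    unfolding Sop_def by (rule finprod_hom[OF h X.A.comm_group_axioms Y.A.comm_group_axioms X.Sop_fun[OF V y]])
  also have "\<dots> = Sop G Y actY V (f y)" unfolding Sop_def
    by (rule Y.A.finprod_cong') (use Y.Sop_fun[OF V fy] eqv X.rep_carrier[OF V] y in auto)
  finally show ?thesis .
qed

lemma smooth_smod:
  fixes X :: "('r::ring_1, 'e) rmod"
  assumes "group G" "smooth_module G T X act" shows "smod G X act"
  using assms unfolding smod_def smod_axioms_def smooth_module_def by auto

lemma conj_cont:
  assumes tg: "topological_group G T" and g: "g \<in> carrier G"
  shows "continuous_map T T (\<lambda>x. inv\<^bsub>G\<^esub> g \<otimes>\<^bsub>G\<^esub> x \<otimes>\<^bsub>G\<^esub> g)"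
proof -
  have grp: "group G" and top: "topspace T = carrier G"
    and cm: "continuous_map (prod_topology T T) T (\<lambda>p. fst p \<otimes>\<^bsub>G\<^esub> snd p)"
    using tg by (auto simp: topological_group_def)
  have ig: "inv\<^bsub>G\<^esub> g \<in> topspace T" using g grp top by simp
  have gt: "g \<in> topspace T" using g top by simp
  have idc: "continuous_map T T (\<lambda>x. x)" using continuous_map_id by (simp add: id_def)
  have c1: "continuous_map T (prod_topology T T) (\<lambda>x. (inv\<^bsub>G\<^esub> g, x))"
    by (rule continuous_map_pairedI) (use ig idc in auto)
  have c2: "continuous_map T T (\<lambda>x. inv\<^bsub>G\<^esub> g \<otimes>\<^bsub>G\<^esub> x)"
    using continuous_map_compose[OF c1 cm] by (simp add: o_def)
  have c3: "continuous_map T (prod_topology T T) (\<lambda>x. (inv\<^bsub>G\<^esub> g \<otimes>\<^bsub>G\<^esub> x, g))"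
    by (rule continuous_map_pairedI) (use c2 gt in auto)
  show ?thesis using continuous_map_compose[OF c3 cm] by (simp add: o_def)
qed

inductive_set Dset :: "('g, 'z) monoid_scheme \<Rightarrow> ('r, 'e) rmod \<Rightarrow> ('g \<Rightarrow> 'e \<Rightarrow> 'e) \<Rightarrow> 'e set"
  for G X act where
  D0: "mzero X \<in> Dset G X act"
| Dstep: "g \<in> carrier G \<Longrightarrow> y \<in> mcar X \<Longrightarrow> d \<in> Dset G X act \<Longrightarrow>
     madd X (madd X (act g y) (inv\<^bsub>AG X\<^esub> y)) d \<in> Dset G X act"

lemma base_below:
  assumes "open_subgroup_base G T B" "openin T W" "\<one>\<^bsub>G\<^esub> \<in> W"
  shows "\<exists>U\<in>B. U \<subseteq> W"
  using assms by (auto simp: open_subgroup_base_def)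

lemma D_vanish:
  fixes G (structure) and X :: "('r::ring_1, 'e) rmod"
  assumes tg: "topological_group G T" and osb: "open_subgroup_base G T B"
    and H3: "\<forall>U\<in>B. \<forall>V\<in>B. V \<subseteq> U \<longrightarrow>
           finite (normalizer_quotient G V) \<and> fixed_cosets G U V = normalizer_cosets G U V"
    and sm: "smooth_module G T X act" and d: "d \<in> Dset G X act"
  shows "\<exists>W. openin T W \<and> \<one>\<^bsub>G\<^esub> \<in> W \<and>
           (\<forall>V\<in>B. V \<subseteq> W \<longrightarrow> d \<in> fixv G X act V \<and> Sop G X act V d = mzero X)"
  using d
proof induct
  have grp: "group G" and top: "topspace T = carrier G" using tg by (auto simp: topological_group_def)
  interpret smod G X act by (rule smooth_smod[OF grp sm])
  case D0
  show ?case
  proof (intro exI conjI ballI impI)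
    show "openin T (carrier G)" using top by (metis openin_topspace)
    show "\<one> \<in> carrier G" by simp
    fix V assume "V \<in> B"
    then have V: "subgroup V G" using osb by (auto simp: open_subgroup_base_def)
    show "mzero X \<in> fixv G X act V" by (rule fixv_one[OF V])
    show "Sop G X act V (mzero X) = mzero X" by (rule Sop_one[OF V])
  qed
next
  case (Dstep g y d)
  have grp: "group G" and top: "topspace T = carrier G" using tg by (auto simp: topological_group_def)
  interpret smod G X act by (rule smooth_smod[OF grp sm])
  from Dstep obtain W where W: "openin T W" "\<one> \<in> W"
    "\<And>V. V \<in> B \<Longrightarrow> V \<subseteq> W \<Longrightarrow> d \<in> fixv G X act V \<and> Sop G X act V d = mzero X" by blast
  have gc: "g \<in> carrier G" and yc: "y \<in> mcar X" using Dstep by auto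
  have stab_open: "openin T {h \<in> carrier G. act h y = y}" using sm yc by (auto simp: smooth_module_def)
  have "\<one> \<in> {h \<in> carrier G. act h y = y}" using act_one[OF yc] by simp
  then obtain U where U: "U \<in> B" "U \<subseteq> {h \<in> carrier G. act h y = y}"
    using base_below[OF osb stab_open] by blast
  have Usg: "subgroup U G" and Uo: "openin T U" using U osb by (auto simp: open_subgroup_base_def)
  have Uc: "U \<subseteq> carrier G" using Usg subgroup.subset by blast
  define Cj where "Cj = {x \<in> topspace T. inv g \<otimes> x \<otimes> g \<in> U}"
  have Cjo: "openin T Cj" unfolding Cj_def by (rule openin_continuous_map_preimage[OF conj_cont[OF tg gc] Uo])
  have "\<one> \<in> Cj" using gc subgroup.one_closed[OF Usg] top by (simp add: Cj_def)
  define W' where "W' = W \<inter> U \<inter> Cj"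
  have W'o: "openin T W'" unfolding W'_def using W(1) Uo Cjo by (intro openin_Int) auto
  have W'1: "\<one> \<in> W'" unfolding W'_def using W(2) \<open>\<one> \<in> Cj\<close> subgroup.one_closed[OF Usg] by simp
  show ?case
  proof (intro exI conjI ballI impI)
    show "openin T W'" by (rule W'o)
    show "\<one> \<in> W'" by (rule W'1)
    fix V assume VB: "V \<in> B" and VW: "V \<subseteq> W'"
    have V: "subgroup V G" using VB osb by (auto simp: open_subgroup_base_def)
    have VU: "V \<subseteq> U" using VW by (auto simp: W'_def)
    have dV: "d \<in> fixv G X act V" and Sd: "Sop G X act V d = mzero X" using W(3)[OF VB] VW by (auto simp: W'_def)
    have yV: "y \<in> fixv G X act V" using VU U(2) yc by (auto simp: fixv_def)
    have fc: "g <# U \<in> fixed_cosets G U V"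
      unfolding fixed_cosets_def
    proof (intro CollectI conjI ballI)
      show "g <# U \<in> (\<lambda>g. g <# U) ` carrier G" using gc by auto
      fix v assume v: "v \<in> V"
      have vc: "v \<in> carrier G" using v V subgroup.subset by blast
      have u': "inv g \<otimes> v \<otimes> g \<in> U" using v VW by (auto simp: W'_def Cj_def)
      have "v \<otimes> g = g \<otimes> (inv g \<otimes> v \<otimes> g)" using gc vc by (simp add: m_assoc[symmetric])
      then have "v <# (g <# U) = g <# ((inv g \<otimes> v \<otimes> g) <# U)"
        using lcos_m_assoc[OF Uc vc gc] lcos_m_assoc[OF Uc gc, of "inv g \<otimes> v \<otimes> g"] gc vc by simp
      also have "\<dots> = g <# U" using coset_join3[OF _ Usg u'] gc vc by simp
      finally show "v <# (g <# U) = g <# U" .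
    qed
    then have "g <# U \<in> normalizer_cosets G U V" using H3 U(1) VB VU by blast
    then obtain n where n: "n \<in> normalizer G V" "g <# U = n <# U" by (auto simp: normalizer_cosets_def)
    have nc: "n \<in> carrier G" using normalizer_mem[OF V n(1)] by simp
    have "g \<in> g <# U" using gc subgroup.one_closed[OF Usg] unfolding l_coset_def by force
    then obtain u where u: "u \<in> U" "g = n \<otimes> u" using n(2) unfolding l_coset_def by auto
    have uc: "u \<in> carrier G" using u Uc by auto
    have gy: "act g y = act n y" using u act_mult[OF nc uc yc] U(2) by auto
    have nyV: "act n y \<in> fixv G X act V" by (rule act_fixv_norm[OF V n(1) yV])
    have iyV: "inv\<^bsub>AG X\<^esub> y \<in> fixv G X act V" by (rule fixv_inv[OF V yV])
    have tV: "madd X (act g y) (inv\<^bsub>AG X\<^esub> y) \<in> fixv G X act V" using fixv_mult[OF V nyV iyV] gy by simp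
    have St: "Sop G X act V (madd X (act g y) (inv\<^bsub>AG X\<^esub> y)) = mzero X"
    proof -
      have a: "act n y \<in> mcar X" using nyV by (auto simp: fixv_def)
      have b: "inv\<^bsub>AG X\<^esub> y \<in> mcar X" using iyV by (auto simp: fixv_def)
      have "Sop G X act V (madd X (act g y) (inv\<^bsub>AG X\<^esub> y))
          = madd X (Sop G X act V y) (inv\<^bsub>AG X\<^esub> (Sop G X act V y))"
        using Sop_mult[OF V a b] Sop_norm[OF V n(1) yV] Sop_inv[OF V yc] gy by simp
      also have "\<dots> = mzero X" using A.r_inv Sop_closed[OF V yc] by simp
      finally show ?thesis .
    qed
    have dc: "d \<in> mcar X" using dV by (auto simp: fixv_def)
    have tc: "madd X (act g y) (inv\<^bsub>AG X\<^esub> y) \<in> mcar X" using tV by (auto simp: fixv_def)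
    show "madd X (madd X (act g y) (inv\<^bsub>AG X\<^esub> y)) d \<in> fixv G X act V" by (rule fixv_mult[OF V tV dV])
    show "Sop G X act V (madd X (madd X (act g y) (inv\<^bsub>AG X\<^esub> y)) d) = mzero X"
      using Sop_mult[OF V tc dc] St Sd A.l_one zero_closed by simp
  qed
qed

lemma main_vanish:
  fixes G (structure) and A :: "('r::ring_1, 'a) rmod" and Bm :: "('r, 'b) rmod" and M :: "('r, 'm) rmod"
  assumes tg: "topological_group G T" and osb: "open_subgroup_base G T B"
    and H3: "\<forall>U\<in>B. \<forall>V\<in>B. V \<subseteq> U \<longrightarrow>
           finite (normalizer_quotient G V) \<and> fixed_cosets G U V = normalizer_cosets G U V"
    and rq: "rQ_module M"
    and smA: "smooth_module G T A actA" and smB: "smooth_module G T Bm actB"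
    and i: "smooth_hom G A actA Bm actB i" and inj: "inj_on i (mcar A)"
    and h: "rlinear A M h" and hinv: "\<forall>g\<in>carrier G. \<forall>a\<in>mcar A. h (actA g a) = h a"
    and a: "a \<in> mcar A" and iaD: "i a \<in> Dset G Bm actB"
  shows "h a = mzero M"
proof -
  have grp: "group G" and top: "topspace T = carrier G" using tg by (auto simp: topological_group_def)
  interpret XA: smod G A actA by (rule smooth_smod[OF grp smA])
  interpret XB: smod G Bm actB by (rule smooth_smod[OF grp smB])
  have Mm: "is_rmodule M" using rq by (simp add: rQ_module_def)
  interpret AM: comm_group "AG M" by (rule AG_comm_group[OF Mm])
  obtain W where W: "openin T W" "\<one> \<in> W"
    "\<And>V. V \<in> B \<Longrightarrow> V \<subseteq> W \<Longrightarrow> i a \<in> fixv G Bm actB V \<and> Sop G Bm actB V (i a) = mzero Bm"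
    using D_vanish[OF tg osb H3 smB iaD] by blast
  have so: "openin T {g \<in> carrier G. actA g a = a}" using smA a by (auto simp: smooth_module_def)
  have "openin T (W \<inter> {g \<in> carrier G. actA g a = a})" using W(1) so by auto
  moreover have "\<one> \<in> W \<inter> {g \<in> carrier G. actA g a = a}" using W(2) XA.act_one[OF a] by simp
  ultimately obtain V where VB: "V \<in> B" and VW: "V \<subseteq> W \<inter> {g \<in> carrier G. actA g a = a}"
    using base_below[OF osb] by blast
  have V: "subgroup V G" using VB osb by (auto simp: open_subgroup_base_def)
  have Vc: "V \<subseteq> carrier G" using V subgroup.subset by blast
  have il: "rlinear A Bm i" and ieq: "\<forall>g\<in>carrier G. \<forall>x\<in>mcar A. i (actA g x) = actB g (i x)"
    using i by (auto simp: smooth_hom_def)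
  have "i (Sop G A actA V a) = Sop G Bm actB V (i a)"
    by (rule Sop_transfer[OF XA.smod_axioms XB.smod_axioms il ieq V a])
  also have "\<dots> = mzero Bm" using W(3)[OF VB] VW by auto
  also have "\<dots> = i (mzero A)" using group_hom.hom_one[OF rlinear_hom[OF XA.modX XB.modX il]] by simp
  finally have "Sop G A actA V a = mzero A"
    using inj XA.Sop_closed[OF V a] XA.zero_closed by (auto simp: inj_on_def)
  then have h0: "h (Sop G A actA V a) = mzero M"
    using group_hom.hom_one[OF rlinear_hom[OF XA.modX Mm h]] by simp
  let ?Q = "normalizer_quotient G V"
  have ha: "h a \<in> mcar M" using h a by (auto simp: rlinear_def)
  have "h (Sop G A actA V a) = finprod (AG M) (\<lambda>C. h (actA (rep G V C) a)) ?Q"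
    unfolding Sop_def by (rule finprod_hom[OF rlinear_hom[OF XA.modX Mm h] XA.A.comm_group_axioms AM.comm_group_axioms XA.Sop_fun[OF V a]])
  also have "\<dots> = finprod (AG M) (\<lambda>C. h a) ?Q"
    by (rule AM.finprod_cong') (use ha hinv XA.rep_carrier[OF V] a in auto)
  also have "\<dots> = h a [^]\<^bsub>AG M\<^esub> card ?Q" using AM.finprod_const ha by simp
  also have "\<dots> = msc M (of_nat (card ?Q)) (h a)" by (rule pow_msc[OF Mm ha])
  finally have hk: "msc M (of_nat (card ?Q)) (h a) = mzero M" using h0 by simp
  have fin: "finite ?Q" using H3 VB by blast
  interpret N: subgroup "normalizer G V" G using XA.normalizer_imp_subgroup[OF Vc] .
  have "V #> \<one> \<in> ?Q" unfolding normalizer_quotient_def by auto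
  then have "card ?Q > 0" using fin card_gt_0_iff by blast
  then have bij: "bij_betw (msc M (of_nat (card ?Q))) (mcar M) (mcar M)" using rq by (simp add: rQ_module_def)
  have "msc M (of_nat (card ?Q)) (mzero M) = mzero M" by (rule msc_zero_vec[OF Mm])
  then show ?thesis using bij hk ha AM.one_closed bij_betw_imp_inj_on[OF bij]
    by (auto simp: inj_on_def)
qed

lemma msc_hom:
  fixes X :: "('r::ring_1, 'e) rmod"
  assumes X: "is_rmodule X" shows "group_hom (AG X) (AG X) (msc X r)"
  using X AG_comm_group[OF X]
  unfolding group_hom_def group_hom_axioms_def hom_def
  by (auto simp: comm_group.axioms(2) is_rmodule_def)

context smod begin

lemma D_sub: "d \<in> Dset G X act \<Longrightarrow> d \<in> mcar X"
  by (induct rule: Dset.induct) (auto intro!: madd_closed act_closed zero_closed ainv_closed)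

lemma D_add: "d \<in> Dset G X act \<Longrightarrow> e \<in> Dset G X act \<Longrightarrow> madd X d e \<in> Dset G X act"
proof (induct rule: Dset.induct)
  case D0 then show ?case using D_sub A.l_one by simp
next
  case (Dstep g y d)
  have t: "madd X (act g y) (inv\<^bsub>AG X\<^esub> y) \<in> mcar X" using Dstep act_closed by (auto intro!: madd_closed ainv_closed)
  have "madd X (madd X (madd X (act g y) (inv\<^bsub>AG X\<^esub> y)) d) e = madd X (madd X (act g y) (inv\<^bsub>AG X\<^esub> y)) (madd X d e)"
    using A.m_assoc t D_sub Dstep by simp
  then show ?case using Dstep Dset.Dstep by metis
qed

lemma D_gen: "g \<in> carrier G \<Longrightarrow> y \<in> mcar X \<Longrightarrow> madd X (act g y) (inv\<^bsub>AG X\<^esub> y) \<in> Dset G X act"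
proof -
  assume g: "g \<in> carrier G" and y: "y \<in> mcar X"
  have "madd X (madd X (act g y) (inv\<^bsub>AG X\<^esub> y)) (mzero X) \<in> Dset G X act"
    by (rule Dset.Dstep[OF g y Dset.D0])
  moreover have "madd X (act g y) (inv\<^bsub>AG X\<^esub> y) \<in> mcar X" using g y act_closed by (auto intro!: madd_closed ainv_closed)
  ultimately show ?thesis using A.r_one by simp
qed

lemma D_msc: "d \<in> Dset G X act \<Longrightarrow> msc X r d \<in> Dset G X act"
proof (induct rule: Dset.induct)
  case D0 then show ?case using msc_zero_vec[OF modX] Dset.D0 by simp
next
  case (Dstep g y d)
  interpret mh: group_hom "AG X" "AG X" "msc X r" by (rule msc_hom[OF modX])
  have gy: "act g y \<in> mcar X" using Dstep act_closed by auto
  have iy: "inv\<^bsub>AG X\<^esub> y \<in> mcar X" using Dstep by (simp add: ainv_closed)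
  have t: "madd X (act g y) (inv\<^bsub>AG X\<^esub> y) \<in> mcar X" using gy iy by (rule madd_closed)
  have "msc X r (madd X (madd X (act g y) (inv\<^bsub>AG X\<^esub> y)) d)
      = madd X (madd X (msc X r (act g y)) (msc X r (inv\<^bsub>AG X\<^esub> y))) (msc X r d)"
    using msc_add[OF modX t D_sub[OF Dstep(3)]] msc_add[OF modX gy iy] by simp
  also have "\<dots> = madd X (madd X (act g (msc X r y)) (inv\<^bsub>AG X\<^esub> (msc X r y))) (msc X r d)"
  proof -
    have "msc X r (inv\<^bsub>AG X\<^esub> y) = inv\<^bsub>AG X\<^esub> (msc X r y)" using mh.hom_inv Dstep(2) by simp
    then show ?thesis using act_lin[OF Dstep(1)] Dstep(2) by (simp add: rlinear_def)
  qed
  finally show ?case using D_add[OF D_gen[OF Dstep(1)] Dstep(4)] rmod_closed(3)[OF modX Dstep(2)] by simp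
qed

lemma D_act: "d \<in> Dset G X act \<Longrightarrow> g' \<in> carrier G \<Longrightarrow> act g' d \<in> Dset G X act"
proof (induct rule: Dset.induct)
  case D0 then show ?case using act_A_one Dset.D0 by simp
next
  case (Dstep g y d)
  have gy: "act g y \<in> mcar X" using Dstep act_closed by auto
  have iy: "inv\<^bsub>AG X\<^esub> y \<in> mcar X" using Dstep by (simp add: ainv_closed)
  have t: "madd X (act g y) (inv\<^bsub>AG X\<^esub> y) \<in> mcar X" using gy iy by (rule madd_closed)
  define a where "a = act (g' \<otimes> g) y"
  define z where "z = act g' y"
  have ac: "a \<in> mcar X" and zc: "z \<in> mcar X" using Dstep act_closed by (auto simp: a_def z_def)
  have yz: "act (inv g') z = y" using Dstep act_mult[of "inv g'" g' y] act_one by (simp add: z_def)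
  have "act g' (madd X (act g y) (inv\<^bsub>AG X\<^esub> y)) = madd X a (inv\<^bsub>AG X\<^esub> z)"
    using act_A_mult[OF Dstep(5) gy iy] act_A_inv[OF Dstep(5) Dstep(2)] act_mult[OF Dstep(5) Dstep(1) Dstep(2)]
    by (simp add: a_def z_def)
  also have "\<dots> = madd X (madd X a (inv\<^bsub>AG X\<^esub> y)) (madd X y (inv\<^bsub>AG X\<^esub> z))"
  proof -
    have "madd X (madd X a (inv\<^bsub>AG X\<^esub> y)) (madd X y (inv\<^bsub>AG X\<^esub> z))
        = madd X a (madd X (madd X (inv\<^bsub>AG X\<^esub> y) y) (inv\<^bsub>AG X\<^esub> z))"
      using A.m_assoc ac zc Dstep(2) by (simp add: ainv_closed madd_closed)
    also have "\<dots> = madd X a (inv\<^bsub>AG X\<^esub> z)" using A.l_inv[of y] A.l_one zc Dstep(2) by (simp add: ainv_closed)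
    finally show ?thesis by simp
  qed
  finally have e1: "act g' (madd X (act g y) (inv\<^bsub>AG X\<^esub> y)) \<in> Dset G X act"
    using D_add[OF D_gen[OF _ Dstep(2), of "g' \<otimes> g"] D_gen[OF inv_closed[OF Dstep(5)] zc]] Dstep(1,5) yz
    by (simp add: a_def)
  have "act g' (madd X (madd X (act g y) (inv\<^bsub>AG X\<^esub> y)) d) = madd X (act g' (madd X (act g y) (inv\<^bsub>AG X\<^esub> y))) (act g' d)"
    using act_A_mult[OF Dstep(5) t D_sub[OF Dstep(3)]] .
  then show ?case using D_add[OF e1 Dstep(4)[OF Dstep(5)]] by simp
qed

lemma D_smooth_submodule: "smooth_submodule G X act (Dset G X act)"
  unfolding smooth_submodule_def using D_sub Dset.D0 D_add D_msc D_act by blast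

end

lemma rlinear_id: "is_rmodule X \<Longrightarrow> rlinear X X (\<lambda>x. x)"
  by (auto simp: rlinear_def is_rmodule_def)

lemma part1:
  fixes G (structure) and M :: "('r::ring_1, 'm) rmod" and E :: "('r, 'e) rmod"
  assumes tg: "topological_group G T" and osb: "open_subgroup_base G T B"
    and H3: "\<forall>U\<in>B. \<forall>V\<in>B. V \<subseteq> U \<longrightarrow>
           finite (normalizer_quotient G V) \<and> fixed_cosets G U V = normalizer_cosets G U V"
    and rq: "rQ_module M"
    and ess: "essential_extension G T M (\<lambda>g x. x) E actE f"
  shows "trivial_action G E actE"
  unfolding trivial_action_def
proof (rule ccontr)
  assume "\<not> (\<forall>g\<in>carrier G. \<forall>x\<in>mcar E. actE g x = x)"
  then obtain g x where g: "g \<in> carrier G" and x: "x \<in> mcar E" and ne: "actE g x \<noteq> x" by blast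
  have grp: "group G" using tg by (auto simp: topological_group_def)
  have smM: "smooth_module G T M (\<lambda>g x. x)" and smE: "smooth_module G T E actE"
    and fh: "smooth_hom G M (\<lambda>g x. x) E actE f" and finj: "inj_on f (mcar M)"
    and essp: "\<And>S. smooth_submodule G E actE S \<Longrightarrow> S \<noteq> {mzero E} \<Longrightarrow> \<exists>x\<in>S. x \<noteq> mzero E \<and> x \<in> f ` mcar M"
    using ess unfolding essential_extension_def by blast+
  interpret XE: smod G E actE by (rule smooth_smod[OF grp smE])
  have Mm: "is_rmodule M" using rq by (simp add: rQ_module_def)
  define t where "t = madd E (actE g x) (inv\<^bsub>AG E\<^esub> x)"
  have tD: "t \<in> Dset G E actE" unfolding t_def by (rule XE.D_gen[OF g x])
  have gx: "actE g x \<in> mcar E" by (rule XE.act_closed[OF g x])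
  have "t \<noteq> mzero E"
  proof
    assume t0: "t = mzero E"
    have "madd E t x = actE g x"
      using XE.A.m_assoc[of "actE g x" "inv\<^bsub>AG E\<^esub> x" x] gx x XE.A.l_inv[of x] XE.A.r_one[of "actE g x"]
      by (simp add: t_def XE.ainv_closed)
    moreover have "madd E t x = x" using t0 XE.A.l_one x by simp
    ultimately show False using ne by simp
  qed
  then have "Dset G E actE \<noteq> {mzero E}" using tD by blast
  then obtain d where dD: "d \<in> Dset G E actE" and d0: "d \<noteq> mzero E" and dm: "d \<in> f ` mcar M"
    using essp[OF XE.D_smooth_submodule] by blast
  then obtain m where m: "m \<in> mcar M" and dfm: "d = f m" by blast
  have "(\<lambda>x. x) m = mzero M"
    by (rule main_vanish[OF tg osb H3 rq smM smE fh finj rlinear_id[OF Mm] _ m]) (use dD dfm in auto)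
  then have "f m = f (mzero M)" by simp
  also have "\<dots> = mzero E"
    using group_hom.hom_one[OF rlinear_hom[OF Mm XE.modX]] fh by (auto simp: smooth_hom_def)
  finally show False using d0 dfm by simp
qed

lemma (in comm_group) ga1:
  assumes "x \<in> carrier G" "x' \<in> carrier G" "d \<in> carrier G" "d' \<in> carrier G" "x \<otimes> d = x' \<otimes> d'"
  shows "x \<otimes> inv x' = d' \<otimes> inv d"
  by (smt (verit, ccfv_threshold) assms(1,2,3,4,5) inv_closed inv_solve_right m_assoc m_closed m_comm)

lemma (in comm_group) ga2:
  assumes "a \<in> carrier G" "b \<in> carrier G" "a \<otimes> inv b = \<one>"
  shows "a = b"
  using assms by (metis inv_closed l_inv m_assoc r_one l_one)

lemma (in comm_group) ga3:
  assumes "p \<in> carrier G" "q \<in> carrier G" "p' \<in> carrier G" "q' \<in> carrier G"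
  shows "(p \<otimes> q) \<otimes> (p' \<otimes> q') = (p \<otimes> p') \<otimes> (q \<otimes> q')"
  using assms by (simp add: m_ac)

definition embY :: "'c \<Rightarrow> ('r, 'b) rmod \<Rightarrow> ('r, 'c \<times> 'b) rmod" where
  "embY c Bm = \<lparr>mcar = Pair c ` mcar Bm, madd = (\<lambda>p q. (c, madd Bm (snd p) (snd q))),
     mzero = (c, mzero Bm), msc = (\<lambda>r p. (c, msc Bm r (snd p)))\<rparr>"

lemma embY_mod:
  fixes Bm :: "('r::ring_1, 'b) rmod"
  assumes "is_rmodule Bm" shows "is_rmodule (embY c Bm)"
proof -
  have inv: "\<forall>x\<in>mcar Bm. \<exists>y\<in>mcar Bm. madd Bm x y = mzero Bm" using assms by (simp add: is_rmodule_def)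
  show ?thesis using assms inv unfolding is_rmodule_def embY_def by (auto simp: image_iff)
qed

lemma sub_mod:
  fixes Y :: "('r::ring_1, 'e) rmod"
  assumes Y: "is_rmodule Y" and S: "S \<subseteq> mcar Y" "mzero Y \<in> S"
    "\<And>x y. x \<in> S \<Longrightarrow> y \<in> S \<Longrightarrow> madd Y x y \<in> S" "\<And>r x. x \<in> S \<Longrightarrow> msc Y r x \<in> S"
  shows "is_rmodule (Y\<lparr>mcar := S\<rparr>)"
proof -
  have inv: "\<exists>y\<in>S. madd Y x y = mzero Y" if x: "x \<in> S" for x
  proof -
    have xc: "x \<in> mcar Y" using x S by auto
    have "madd Y x (msc Y (-1) x) = mzero Y"
      using msc_addsc[OF Y xc, of 1 "-1"] msc_one[OF Y xc] msc_zero_sc[OF Y xc] by simp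
    then show ?thesis using S(4) x by blast
  qed
  have eqs: "mcar (Y\<lparr>mcar := S\<rparr>) = S" "madd (Y\<lparr>mcar := S\<rparr>) = madd Y"
    "mzero (Y\<lparr>mcar := S\<rparr>) = mzero Y" "msc (Y\<lparr>mcar := S\<rparr>) = msc Y" by simp_all
  have Yp: "is_rmodule Y" by (rule Y)
  show ?thesis unfolding is_rmodule_def eqs
  proof (intro conjI)
    note sub = subsetD[OF S(1)]
    show "mzero Y \<in> S" by (rule S(2))
    show "\<forall>x\<in>S. \<forall>y\<in>S. madd Y x y \<in> S" using S(3) by blast
    show "\<forall>r x. x \<in> S \<longrightarrow> msc Y r x \<in> S" using S(4) by blast
    show "\<forall>x\<in>S. \<forall>y\<in>S. \<forall>z\<in>S. madd Y (madd Y x y) z = madd Y x (madd Y y z)"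
      using Yp sub unfolding is_rmodule_def by (meson)
    show "\<forall>x\<in>S. \<forall>y\<in>S. madd Y x y = madd Y y x" using Yp sub unfolding is_rmodule_def by meson
    show "\<forall>x\<in>S. madd Y (mzero Y) x = x" using Yp sub unfolding is_rmodule_def by meson
    show "\<forall>x\<in>S. \<exists>y\<in>S. madd Y x y = mzero Y" using inv by blast
    show "\<forall>r x y. x \<in> S \<longrightarrow> y \<in> S \<longrightarrow> msc Y r (madd Y x y) = madd Y (msc Y r x) (msc Y r y)"
      using msc_add[OF Yp] sub by blast
    show "\<forall>r s x. x \<in> S \<longrightarrow> msc Y (r + s) x = madd Y (msc Y r x) (msc Y s x)" using msc_addsc[OF Yp] sub by blast
    show "\<forall>r s x. x \<in> S \<longrightarrow> msc Y (r * s) x = msc Y r (msc Y s x)" using msc_mult[OF Yp] sub by blast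
    show "\<forall>x\<in>S. msc Y 1 x = x" using msc_one[OF Yp] sub by blast
  qed
qed

lemma trivial_smooth:
  fixes M :: "('r::ring_1, 'm) rmod"
  assumes tg: "topological_group G T" and Mm: "is_rmodule M"
  shows "smooth_module G T M (\<lambda>g x. x)"
proof -
  have top: "topspace T = carrier G" using tg by (auto simp: topological_group_def)
  have "openin T (carrier G)" using top by (metis openin_topspace)
  then show ?thesis using Mm rlinear_id[OF Mm] unfolding smooth_module_def by (auto simp: is_rmodule_def)
qed

lemma part2_ext:
  fixes G (structure) and M :: "('r::ring_1, 'm) rmod"
    and A :: "('r, 'a) rmod" and Bm :: "('r, 'b) rmod"
  assumes tg: "topological_group G T" and osb: "open_subgroup_base G T B"
    and H3: "\<forall>U\<in>B. \<forall>V\<in>B. V \<subseteq> U \<longrightarrow>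
           finite (normalizer_quotient G V) \<and> fixed_cosets G U V = normalizer_cosets G U V"
    and rq: "rQ_module M"
    and injM: "rmod_injective_in TYPE('m \<times> 'b) M"
    and smA: "smooth_module G T A actA" and smB: "smooth_module G T Bm actB"
    and ih: "smooth_hom G A actA Bm actB i" and inj: "inj_on i (mcar A)"
    and hh: "smooth_hom G A actA M (\<lambda>g x. x) h"
  shows "\<exists>k. smooth_hom G Bm actB M (\<lambda>g x. x) k \<and> (\<forall>x\<in>mcar A. k (i x) = h x)"
proof -
  have grp: "group G" using tg by (auto simp: topological_group_def)
  interpret XA: smod G A actA by (rule smooth_smod[OF grp smA])
  interpret XB: smod G Bm actB by (rule smooth_smod[OF grp smB])
  have Mm: "is_rmodule M" using rq by (simp add: rQ_module_def)
  interpret AM: comm_group "AG M" by (rule AG_comm_group[OF Mm])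
  have smM: "smooth_module G T M (\<lambda>g x. x)" by (rule trivial_smooth[OF tg Mm])
  have il: "rlinear A Bm i" and ieq: "\<forall>g\<in>carrier G. \<forall>x\<in>mcar A. i (actA g x) = actB g (i x)"
    using ih by (auto simp: smooth_hom_def)
  have hl: "rlinear A M h" and heq: "\<forall>g\<in>carrier G. \<forall>x\<in>mcar A. h (actA g x) = h x"
    using hh by (auto simp: smooth_hom_def)
  interpret ihom: group_hom "AG A" "AG Bm" i by (rule rlinear_hom[OF XA.modX XB.modX il])
  interpret hhom: group_hom "AG A" "AG M" h by (rule rlinear_hom[OF XA.modX Mm hl])
  have ic: "\<And>a. a \<in> mcar A \<Longrightarrow> i a \<in> mcar Bm" using il by (auto simp: rlinear_def)
  have hc: "\<And>a. a \<in> mcar A \<Longrightarrow> h a \<in> mcar M" using hl by (auto simp: rlinear_def)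
  have iz: "i (mzero A) = mzero Bm" using ihom.hom_one by simp
  have hz: "h (mzero A) = mzero M" using hhom.hom_one by simp
  define DB where "DB = Dset G Bm actB"
  have DBc: "\<And>d. d \<in> DB \<Longrightarrow> d \<in> mcar Bm" unfolding DB_def by (rule XB.D_sub)
  have DBinv: "\<And>d. d \<in> DB \<Longrightarrow> inv\<^bsub>AG Bm\<^esub> d \<in> DB"
    unfolding DB_def using XB.D_msc msc_neg[OF XB.modX] XB.D_sub by metis
  have wd: "h a = h a'" if a: "a \<in> mcar A" and a': "a' \<in> mcar A" and d: "d \<in> DB" and d': "d' \<in> DB"
    and eq: "madd Bm (i a) d = madd Bm (i a') d'" for a a' d d'
  proof -
    define x where "x = madd A a (inv\<^bsub>AG A\<^esub> a')"
    have xc: "x \<in> mcar A" unfolding x_def using a a' by (simp add: XA.madd_closed XA.ainv_closed)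
    have "i x = madd Bm (i a) (inv\<^bsub>AG Bm\<^esub> (i a'))"
      unfolding x_def using a a' ihom.hom_mult ihom.hom_inv by (simp add: XA.ainv_closed)
    also have "\<dots> = madd Bm d' (inv\<^bsub>AG Bm\<^esub> d)"
      using XB.A.ga1[of "i a" "i a'" d d'] ic a a' DBc d d' eq by simp
    finally have "i x \<in> DB" using DB_def XB.D_add[OF d'[unfolded DB_def] DBinv[OF d, unfolded DB_def]] by simp
    then have "h x = mzero M"
      by (intro main_vanish[OF tg osb H3 rq smA smB ih inj hl heq xc]) (simp add: DB_def)
    moreover have "h x = madd M (h a) (inv\<^bsub>AG M\<^esub> (h a'))"
      unfolding x_def using a a' hhom.hom_mult hhom.hom_inv by (simp add: XA.ainv_closed)
    ultimately show ?thesis using AM.ga2[of "h a" "h a'"] hc a a' by simp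
  qed
  define Wset where "Wset = {madd Bm (i a) d | a d. a \<in> mcar A \<and> d \<in> DB}"
  define c where "c = (undefined :: 'm)"
  define Y where "Y = (embY c Bm :: ('r, 'm \<times> 'b) rmod)"
  define X where "X = Y\<lparr>mcar := Pair c ` Wset\<rparr>"
  define k0 where "k0 = (\<lambda>p::'m \<times> 'b. h (SOME a. a \<in> mcar A \<and> (\<exists>d\<in>DB. snd p = madd Bm (i a) d)))"
  have k0eq: "k0 (c, madd Bm (i a) d) = h a" if a: "a \<in> mcar A" and d: "d \<in> DB" for a d
  proof -
    define P where "P = (\<lambda>a0. a0 \<in> mcar A \<and> (\<exists>d0\<in>DB. madd Bm (i a) d = madd Bm (i a0) d0))"
    have "P a" unfolding P_def using a d by blast
    then have "P (Eps P)" by (rule someI)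
    then obtain d0 where a0: "Eps P \<in> mcar A" and d0: "d0 \<in> DB" and e: "madd Bm (i a) d = madd Bm (i (Eps P)) d0"
      unfolding P_def by blast
    have "k0 (c, madd Bm (i a) d) = h (Eps P)" unfolding k0_def P_def by simp
    also have "\<dots> = h a" using wd[OF a a0 d d0 e] by simp
    finally show ?thesis .
  qed
  have Wc: "Wset \<subseteq> mcar Bm" unfolding Wset_def using ic DBc by (auto intro!: XB.madd_closed)
  have W0: "mzero Bm \<in> Wset"
  proof -
    have "madd Bm (i (mzero A)) (mzero Bm) = mzero Bm" using iz XB.A.l_one XB.zero_closed by simp
    moreover have "mzero Bm \<in> DB" unfolding DB_def by (rule Dset.D0)
    ultimately show ?thesis unfolding Wset_def using XA.zero_closed by (metis (mono_tags, lifting) mem_Collect_eq)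
  qed
  have Wmem: "\<And>w. w \<in> Wset \<Longrightarrow> \<exists>a d. a \<in> mcar A \<and> d \<in> DB \<and> w = madd Bm (i a) d"
    unfolding Wset_def by blast
  have Wadd_eq: "madd Bm (madd Bm (i a) d) (madd Bm (i a') d') = madd Bm (i (madd A a a')) (madd Bm d d')"
    if "a \<in> mcar A" "a' \<in> mcar A" "d \<in> DB" "d' \<in> DB" for a a' d d'
    using that XB.A.ga3[of "i a" d "i a'" d'] ic DBc ihom.hom_mult by simp
  have Wmsc_eq: "msc Bm r (madd Bm (i a) d) = madd Bm (i (msc A r a)) (msc Bm r d)"
    if "a \<in> mcar A" "d \<in> DB" for a d r
    using that msc_add[OF XB.modX] ic DBc il by (simp add: rlinear_def)
  have Wadd: "madd Bm w w' \<in> Wset" if ww: "w \<in> Wset" "w' \<in> Wset" for w w'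
  proof -
    obtain a d where ad: "a \<in> mcar A" "d \<in> DB" "w = madd Bm (i a) d" using Wmem[OF ww(1)] by blast
    obtain a' d' where ad': "a' \<in> mcar A" "d' \<in> DB" "w' = madd Bm (i a') d'" using Wmem[OF ww(2)] by blast
    have e: "madd Bm w w' = madd Bm (i (madd A a a')) (madd Bm d d')" using Wadd_eq ad ad' by simp
    have m1: "madd A a a' \<in> mcar A" using ad ad' XA.madd_closed by simp
    have m2: "madd Bm d d' \<in> DB" using XB.D_add ad ad' unfolding DB_def by simp
    show ?thesis unfolding Wset_def using e m1 m2 by blast
  qed
  have Wmsc: "msc Bm r w \<in> Wset" if ww: "w \<in> Wset" for w r
  proof -
    obtain a d where ad: "a \<in> mcar A" "d \<in> DB" "w = madd Bm (i a) d" using Wmem[OF ww] by blast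
    have e: "msc Bm r w = madd Bm (i (msc A r a)) (msc Bm r d)" using Wmsc_eq ad by simp
    have m1: "msc A r a \<in> mcar A" using ad rmod_closed(3)[OF XA.modX] by simp
    have m2: "msc Bm r d \<in> DB" using XB.D_msc ad unfolding DB_def by simp
    show ?thesis unfolding Wset_def using e m1 m2 by blast
  qed
  have Ymod: "is_rmodule Y" unfolding Y_def by (rule embY_mod[OF XB.modX])
  have Xmod: "is_rmodule X" unfolding X_def
  proof (rule sub_mod[OF Ymod])
    show "Pair c ` Wset \<subseteq> mcar Y" using Wc by (auto simp: Y_def embY_def)
    show "mzero Y \<in> Pair c ` Wset" using W0 by (simp add: Y_def embY_def)
    show "\<And>x y. x \<in> Pair c ` Wset \<Longrightarrow> y \<in> Pair c ` Wset \<Longrightarrow> madd Y x y \<in> Pair c ` Wset"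
      using Wadd by (auto simp: Y_def embY_def)
    show "\<And>r x. x \<in> Pair c ` Wset \<Longrightarrow> msc Y r x \<in> Pair c ` Wset"
      using Wmsc by (auto simp: Y_def embY_def)
  qed
  have XY: "rlinear X Y (\<lambda>x. x)" using Wc by (auto simp: rlinear_def X_def Y_def embY_def)
  have injXY: "inj_on (\<lambda>x. x) (mcar X)" by simp
  have k0lin: "rlinear X M k0"
    unfolding rlinear_def
  proof (intro conjI ballI allI)
    fix p assume "p \<in> mcar X"
    then obtain w where w: "w \<in> Wset" "p = (c, w)" by (auto simp: X_def)
    then obtain a d where ad: "a \<in> mcar A" "d \<in> DB" "p = (c, madd Bm (i a) d)" using Wmem[OF w(1)] by blast
    show "k0 p \<in> mcar M" using ad k0eq hc by simp
    fix r
    show "k0 (msc X r p) = msc M r (k0 p)"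
      using ad k0eq Wmsc_eq rmod_closed(3)[OF XA.modX] XB.D_msc[of d r] hl
      by (simp add: X_def Y_def embY_def DB_def rlinear_def)
  next
    fix p q assume "p \<in> mcar X" "q \<in> mcar X"
    then have "snd p \<in> Wset" "snd q \<in> Wset" "fst p = c" "fst q = c" by (auto simp: X_def)
    then obtain a d a' d' where ad: "a \<in> mcar A" "d \<in> DB" "p = (c, madd Bm (i a) d)"
      and ad': "a' \<in> mcar A" "d' \<in> DB" "q = (c, madd Bm (i a') d')" using Wmem by (metis prod.collapse)
    show "k0 (madd X p q) = madd M (k0 p) (k0 q)"
      using ad ad' k0eq Wadd_eq XA.madd_closed XB.D_add[of d d'] hl
      by (simp add: X_def Y_def embY_def DB_def rlinear_def)
  qed
  have pre: "is_rmodule X \<and> is_rmodule Y \<and> rlinear X Y (\<lambda>x. x) \<and> inj_on (\<lambda>x. x) (mcar X) \<and> rlinear X M k0"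
    using Xmod Ymod XY injXY k0lin by blast
  obtain k where kl: "rlinear Y M k" and kx: "\<forall>x\<in>mcar X. k x = k0 x"
    using injM[unfolded rmod_injective_in_def, rule_format, OF pre] by blast
  define K where "K = (\<lambda>b. k (c, b))"
  have Kl: "rlinear Bm M K"
    using kl unfolding rlinear_def K_def by (auto simp: Y_def embY_def)
  have KX: "K w = k0 (c, w)" if "w \<in> Wset" for w using kx that by (auto simp: K_def X_def)
  have Kt: "K (madd Bm (actB g b) (inv\<^bsub>AG Bm\<^esub> b)) = mzero M" if g: "g \<in> carrier G" and b: "b \<in> mcar Bm" for g b
  proof -
    let ?t = "madd Bm (actB g b) (inv\<^bsub>AG Bm\<^esub> b)"
    have tD: "?t \<in> DB" unfolding DB_def by (rule XB.D_gen[OF g b])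
    have "madd Bm (i (mzero A)) ?t = ?t" using iz XB.A.l_one DBc[OF tD] by simp
    then have "K ?t = k0 (c, madd Bm (i (mzero A)) ?t)" using KX[of ?t] tD XA.zero_closed unfolding Wset_def by force
    also have "\<dots> = mzero M" using k0eq[OF XA.zero_closed tD] hz by simp
    finally show ?thesis .
  qed
  show ?thesis
  proof (intro exI conjI ballI)
    show "smooth_hom G Bm actB M (\<lambda>g x. x) K"
      unfolding smooth_hom_def
    proof (intro conjI ballI)
      show "rlinear Bm M K" by (rule Kl)
      fix g b assume g: "g \<in> carrier G" and b: "b \<in> mcar Bm"
      let ?t = "madd Bm (actB g b) (inv\<^bsub>AG Bm\<^esub> b)"
      have gb: "actB g b \<in> mcar Bm" by (rule XB.act_closed[OF g b])
      have tc: "?t \<in> mcar Bm" using gb b by (simp add: XB.madd_closed XB.ainv_closed)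
      have "madd Bm ?t b = actB g b"
        using XB.A.m_assoc[of "actB g b" "inv\<^bsub>AG Bm\<^esub> b" b] gb b XB.A.l_inv[of b] XB.A.r_one[of "actB g b"]
        by (simp add: XB.ainv_closed)
      then have "K (actB g b) = K (madd Bm ?t b)" by simp
      also have "\<dots> = madd M (K ?t) (K b)" using Kl tc b unfolding rlinear_def by blast
      also have "\<dots> = K b" using Kt[OF g b] AM.l_one Kl b by (auto simp: rlinear_def)
      finally show "K (actB g b) = K b" .
    qed
    fix a assume a: "a \<in> mcar A"
    have "madd Bm (i a) (mzero Bm) = i a" using XB.A.r_one ic[OF a] by simp
    moreover have "mzero Bm \<in> DB" unfolding DB_def by (rule Dset.D0)
    ultimately have "i a \<in> Wset" using a unfolding Wset_def by force
    then have "K (i a) = k0 (c, madd Bm (i a) (mzero Bm))" using KX \<open>madd Bm (i a) (mzero Bm) = i a\<close> by simp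
    also have "\<dots> = h a" using k0eq[OF a \<open>mzero Bm \<in> DB\<close>] .
    finally show "K (i a) = h a" .
  qed
qed

theorem lemmaA11:
  fixes G :: "('g, 'z) monoid_scheme" and T :: "'g topology" and B :: "'g set set"
    and M :: "('r::ring_1, 'm) rmod"
  assumes "permutation_group G T"
    and "open_subgroup_base G T B"
    and "\<forall>U\<in>B. \<forall>V\<in>B. V \<subseteq> U \<longrightarrow>
           finite (normalizer_quotient G V) \<and> fixed_cosets G U V = normalizer_cosets G U V"
    and "rQ_module M"
  shows "(\<forall>(E :: ('r, 'e) rmod) actE f.
            essential_extension G T M (\<lambda>g x. x) E actE f \<longrightarrow> trivial_action G E actE)
       \<and> (rmod_injective_in TYPE('m \<times> 'b) M \<longrightarrow>
            smooth_injective_in TYPE('a) TYPE('b) G T M (\<lambda>g x. x))"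
proof -
  have tg: "topological_group G T" using assms(1) by (simp add: permutation_group_def)
  have Mm: "is_rmodule M" using assms(4) by (simp add: rQ_module_def)
  show ?thesis
  proof (intro conjI allI impI)
    fix E :: "('r, 'e) rmod" and actE f
    assume "essential_extension G T M (\<lambda>g x. x) E actE f"
    then show "trivial_action G E actE" by (rule part1[OF tg assms(2) assms(3) assms(4)])
  next
    assume inj: "rmod_injective_in TYPE('m \<times> 'b) M"
    show "smooth_injective_in TYPE('a) TYPE('b) G T M (\<lambda>g x. x)"
      unfolding smooth_injective_in_def
    proof (intro conjI allI impI)
      show "smooth_module G T M (\<lambda>g x. x)" by (rule trivial_smooth[OF tg Mm])
      fix A :: "('r, 'a) rmod" and actA and Bm :: "('r, 'b) rmod" and actB i h
      assume "smooth_module G T A actA \<and> smooth_module G T Bm actB \<and>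
        smooth_hom G A actA Bm actB i \<and> inj_on i (mcar A) \<and> smooth_hom G A actA M (\<lambda>g x. x) h"
      then show "\<exists>k. smooth_hom G Bm actB M (\<lambda>g x. x) k \<and> (\<forall>x\<in>mcar A. k (i x) = h x)"
        using part2_ext[OF tg assms(2) assms(3) assms(4) inj] by blast
    qed
  qed
qed

end
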